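(* Let $a,b,c\in\mathbb{C}$ with $\Re(b)>0$, $\Re(b+a+c)>0$, $\Re(b+a-c)>0$, $\Re(b-a+c)>0$, $\Re(b-a-c)>0$, and $\frac{a+c}{b},\frac{a-c}{b}\notin\{\pm1,\pm3,\pm5,\dots\}$. Fix a square root $\sqrt{a^2+c^2}$, put $\nu=\frac{\sqrt{a^2+c^2}}{2b}$, $\tau_1=\frac12-\frac{a+c}{2b}$, $\tau_2=\frac12-\frac{a-c}{2b}$, $\tau_3=\frac12+\frac{a+c}{2b}$, $\tau_4=\frac12+\frac{a-c}{2b}$, and $Q=(b-a-c)(b+a+c)(b-a+c)(b+a-c)$. Assume $\frac12\pm\nu\notin\mathbb{Z}_0^-$ and $1+\tau_j\notin\mathbb{Z}_0^-$ ($j=1,\dots,4$). Then $$ {}_8F_7\!\left(\begin{matrix}1,\ \frac32,\ \frac32-\nu,\ \frac32+\nu,\ \tau_1,\ \tau_2,\ \tau_3,\ \tau_4\\ \frac12,\ \frac12-\nu,\ \frac12+\nu,\ 1+\tau_1,\ 1+\tau_2,\ 1+\tau_3,\ 1+\tau_4\end{matrix};\,-1\right) =\frac{\pi Q}{2\,(b^4-a^2b^2-c^2b^2)}\cdot\frac{\cos\!\big(\frac{a\pi}{2b}\big)\cos\!\big(\frac{c\pi}{2b}\big)}{\cos\!\big(\frac{c\pi}{b}\big)+\cos\!\big(\frac{a\pi}{b}\big)}. $$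
   Context: $\mathbb{Z}_0^-=\{0,-1,-2,\dots\}$. The Pochhammer symbol is $(\lambda)_0=1$, $(\lambda)_n=\lambda(\lambda+1)\cdots(\lambda+n-1)$ for $n\ge1$. The generalized hypergeometric series is ${}_pF_q\!\left(\begin{matrix}\alpha_1,\dots,\alpha_p\\ \beta_1,\dots,\beta_q\end{matrix};z\right)=\sum_{n=0}^\infty\frac{(\alpha_1)_n\cdots(\alpha_p)_n}{(\beta_1)_n\cdots(\beta_q)_n}\frac{z^n}{n!}$ (with no $\beta_j\in\mathbb{Z}_0^-$). *)

theory Defs
  imports "HOL-Analysis.Analysis"
begin

definition hyp_term :: "complex list \<Rightarrow> complex list \<Rightarrow> complex \<Rightarrow> nat \<Rightarrow> complex" where
  "hyp_term as bs z n =
     (prod_list (map (\<lambda>a. pochhammer a n) as) / prod_list (map (\<lambda>b. pochhammer b n) bs))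
     * z ^ n / of_nat (fact n)"

definition hypergeom :: "complex list \<Rightarrow> complex list \<Rightarrow> complex \<Rightarrow> complex" where
  "hypergeom as bs z = (\<Sum>n. hyp_term as bs z n)"

definition odd_int_complex :: "complex \<Rightarrow> bool" where
  "odd_int_complex w \<longleftrightarrow> (\<exists>k::int. w = of_int (2 * k + 1))"

end

theory Submission
  imports Defs "HOL-Analysis.Analysis"
begin


lemma Digamma_reflection:
  fixes z :: complex
  assumes z: "z \<notin> \<int>"
  shows "Digamma (1 - z) - Digamma z = of_real pi * cot (of_real pi * z)"
proof -
  have z1: "z \<notin> \<int>\<^sub>\<le>\<^sub>0" using z nonpos_Ints_subset_Ints by blast
  have "1 - z \<notin> \<int>" using z Ints_diff[of 1 "1 - z"] by auto
  hence z2: "1 - z \<notin> \<int>\<^sub>\<le>\<^sub>0" using nonpos_Ints_subset_Ints by blast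
  have g1: "(rGamma has_field_derivative -rGamma z * Digamma z) (at z)"
    using has_field_derivative_rGamma_no_nonpos_int[OF z1] .
  have g2': "(rGamma has_field_derivative -rGamma (1-z) * Digamma (1-z)) (at (1-z))"
    using has_field_derivative_rGamma_no_nonpos_int[OF z2] .
  have lin: "((\<lambda>w. 1 - w) has_field_derivative (-1)) (at z)"
    by (auto intro!: derivative_eq_intros)
  have g2: "((\<lambda>w. rGamma (1 - w)) has_field_derivative (-rGamma (1-z) * Digamma (1-z)) * (-1)) (at z)"
    using DERIV_chain2[OF g2' lin] by simp
  have d1: "((\<lambda>w. rGamma w * rGamma (1 - w)) has_field_derivative
      (-rGamma z * Digamma z) * rGamma (1 - z) + rGamma z * ((-rGamma (1-z) * Digamma (1-z)) * (-1))) (at z)"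
    using DERIV_mult[OF g1 g2] by (simp add: mult_ac)
  have d2: "((\<lambda>w::complex. sin (of_real pi * w) / of_real pi) has_field_derivative cos (of_real pi * z)) (at z)"
    by (auto intro!: derivative_eq_intros)
  have "(\<lambda>w. rGamma w * rGamma (1 - w)) = (\<lambda>w::complex. sin (of_real pi * w) / of_real pi)"
    using rGamma_reflection_complex by auto
  with d1 d2 have eq: "(-rGamma z * Digamma z) * rGamma (1 - z) + rGamma z * ((-rGamma (1-z) * Digamma (1-z)) * (-1))
       = cos (of_real pi * z)"
    using DERIV_unique by metis
  have R: "rGamma z * rGamma (1 - z) = sin (of_real pi * z) / of_real pi"
    by (rule rGamma_reflection_complex)
  have sn: "sin (of_real pi * z) \<noteq> 0"
  proof
    assume "sin (of_real pi * z) = 0"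
    then obtain n :: int where "of_real pi * z = of_real (n * pi)" by (auto simp: sin_eq_0)
    hence "z = of_int n" by (simp add: field_simps)
    with z show False by auto
  qed
  from eq have "rGamma z * rGamma (1 - z) * (Digamma (1 - z) - Digamma z) = cos (of_real pi * z)"
    by (simp add: algebra_simps)
  with R have "sin (of_real pi * z) / of_real pi * (Digamma (1 - z) - Digamma z) = cos (of_real pi * z)"
    by simp
  with sn show ?thesis by (simp add: cot_def field_simps)
qed


lemma Digamma_diff_sums:
  fixes w v :: complex
  assumes "w \<noteq> 0" "v \<noteq> 0"
  shows "(\<lambda>k. 1 / (of_nat k + w) - 1 / (of_nat k + v)) sums (Digamma v - Digamma w)"
proof -
  have sw: "(\<lambda>k. inverse (of_nat (Suc k)) - inverse (w + of_nat k)) sums (Digamma w + euler_mascheroni)"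
    using summable_Digamma[OF assms(1)] by (simp add: Digamma_def summable_sums)
  have sv: "(\<lambda>k. inverse (of_nat (Suc k)) - inverse (v + of_nat k)) sums (Digamma v + euler_mascheroni)"
    using summable_Digamma[OF assms(2)] by (simp add: Digamma_def summable_sums)
  from sums_diff[OF sv sw] show ?thesis
    by (simp add: divide_inverse add.commute)
qed

lemma inv_lim0: "(\<lambda>n. 1 / (of_nat n + w :: complex)) \<longlonglongrightarrow> 0"
  by (rule tendsto_divide_0[OF tendsto_const],
      rule tendsto_add_filterlim_at_infinity'[OF tendsto_of_nat tendsto_const])

lemma limseq_even_odd':
  assumes "(\<lambda>n. f (2 * n)) \<longlonglongrightarrow> (l :: 'a :: metric_space)"
      and "(\<lambda>n. f (2 * n + 1)) \<longlonglongrightarrow> l"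
  shows "f \<longlonglongrightarrow> l"
  unfolding lim_sequentially
proof (intro allI impI)
  fix r :: real assume r: "r > 0"
  obtain N1 where N1: "\<And>n. n \<ge> N1 \<Longrightarrow> dist (f (2*n)) l < r"
    using assms(1)[unfolded lim_sequentially] r by blast
  obtain N2 where N2: "\<And>n. n \<ge> N2 \<Longrightarrow> dist (f (2*n+1)) l < r"
    using assms(2)[unfolded lim_sequentially] r by blast
  show "\<exists>N. \<forall>n\<ge>N. dist (f n) l < r"
  proof (intro exI allI impI)
    fix n assume n: "2*N1 + 2*N2 \<le> n"
    show "dist (f n) l < r"
    proof (cases "even n")
      case True
      then obtain m where "n = 2*m" by (auto elim: evenE)
      with n N1[of m] show ?thesis by auto
    next
      case False
      then obtain m where "n = 2*m+1" by (auto elim: oddE)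
      with n N2[of m] show ?thesis by auto
    qed
  qed
qed



lemma half_inv: "1 / (2 * x) = (1/2) * (1 / (x::complex))"
  by simp

lemma notint_helper:
  fixes u :: complex assumes "u \<notin> \<int>"
  shows "u/2 \<notin> \<int>" "(1-u)/2 \<notin> \<int>" "u/2 \<noteq> 0" "1 - u/2 \<noteq> 0" "(1-u)/2 \<noteq> 0" "(1+u)/2 \<noteq> 0"
proof -
  show "u/2 \<notin> \<int>"
  proof
    assume "u/2 \<in> \<int>" then have "2 * (u/2) \<in> \<int>" by (intro Ints_mult) auto
    with assms show False by simp
  qed
  show "(1-u)/2 \<notin> \<int>"
  proof
    assume "(1-u)/2 \<in> \<int>" then have "1 - 2 * ((1-u)/2) \<in> \<int>" by (intro Ints_mult Ints_diff) auto
    moreover have "1 - 2 * ((1-u)/2) = u" by (simp add: field_simps)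
    ultimately show False using assms by metis
  qed
  show "u/2 \<noteq> 0" using assms by auto
  show "1 - u/2 \<noteq> 0"
  proof
    assume "1 - u/2 = 0" then have "u = 2" by (simp add: field_simps)
    with assms show False by simp
  qed
  show "(1-u)/2 \<noteq> 0"
  proof
    assume "(1-u)/2 = 0" then have "u = 1" by (simp add: field_simps)
    with assms show False by simp
  qed
  show "(1+u)/2 \<noteq> 0"
  proof
    assume "(1+u)/2 = 0" then have "u = -1" by (simp add: field_simps add_eq_0_iff)
    with assms show False by simp
  qed
qed

lemma sin_pi_nz:
  fixes z :: complex assumes "z \<notin> \<int>" shows "sin (of_real pi * z) \<noteq> 0"
proof
  assume "sin (of_real pi * z) = 0"
  then obtain n :: int where "of_real pi * z = of_real (n * pi)" by (auto simp: sin_eq_0)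
  hence "z = of_int n" by (simp add: field_simps)
  with assms show False by auto
qed

lemma alt_csc_sums:
  fixes u :: complex
  assumes u: "u \<notin> \<int>"
  shows "(\<lambda>n. (-1)^n * (1 / (of_nat n + u) + 1 / (of_nat n + 1 - u))) sums (of_real pi / sin (of_real pi * u))"
proof -
  define t where "t n = (-1)^n * (1 / (of_nat n + u) + 1 / (of_nat n + 1 - u))" for n
  note h = notint_helper[OF u]
  have A: "(\<lambda>k. 1 / (of_nat k + u/2) - 1 / (of_nat k + (1 - u/2))) sums (of_real pi * cot (of_real pi * (u/2)))"
    using Digamma_diff_sums[OF h(3) h(4)] Digamma_reflection[OF h(1)] by simp
  have B: "(\<lambda>k. 1 / (of_nat k + (1-u)/2) - 1 / (of_nat k + (1+u)/2)) sums (of_real pi * cot (of_real pi * ((1-u)/2)))"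
  proof -
    have eq: "1 - (1-u)/2 = (1+u)/2" by (simp add: field_simps)
    have R: "Digamma ((1+u)/2) - Digamma ((1-u)/2) = of_real pi * cot (of_real pi * ((1-u)/2))"
      using Digamma_reflection[OF h(2)] unfolding eq .
    show ?thesis using Digamma_diff_sums[OF h(5) h(6)] unfolding R .
  qed
  define L where "L = (1/2) * (of_real pi * cot (of_real pi * (u/2)) + of_real pi * cot (of_real pi * ((1-u)/2)))"
  have pair: "(\<lambda>k. t (2*k) + t (2*k+1)) sums L"
  proof -
    have "(\<lambda>k. (1/2) * ((1 / (of_nat k + u/2) - 1 / (of_nat k + (1 - u/2))) +
        (1 / (of_nat k + (1-u)/2) - 1 / (of_nat k + (1+u)/2)))) sums L"
      unfolding L_def by (intro sums_mult sums_add A B)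
    moreover have X: "t (2*k) + t (2*k+1) = (1/2) * ((1 / (of_nat k + u/2) - 1 / (of_nat k + (1 - u/2))) +
        (1 / (of_nat k + (1-u)/2) - 1 / (of_nat k + (1+u)/2)))" for k
    proof -
      have e1: "of_nat (2*k) + u = 2 * (of_nat k + u/2)" by simp
      have e2: "of_nat (2*k) + 1 - u = 2 * (of_nat k + (1-u)/2)" by (simp add: field_simps)
      have e3: "of_nat (2*k+1) + u = 2 * (of_nat k + (1+u)/2)" by (simp add: field_simps)
      have e4: "of_nat (2*k+1) + 1 - u = 2 * (of_nat k + (1-u/2))" by (simp add: field_simps)
      show ?thesis unfolding t_def e1 e2 e3 e4 half_inv by (simp add: algebra_simps)
    qed
    ultimately show ?thesis by (simp only: X)
  qed
  have Lval: "L = of_real pi / sin (of_real pi * u)"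
  proof -
    define x :: complex where "x = of_real pi * (u/2)"
    have su: "sin (of_real pi * u) = 2 * sin x * cos x"
      unfolding x_def using sin_double[of "of_real pi * (u/2) :: complex"] by simp
    have snz: "sin (of_real pi * u) \<noteq> 0" using sin_pi_nz[OF u] .
    have c2: "of_real pi * ((1-u)/2) = of_real pi / 2 - x" unfolding x_def by (simp add: field_simps)
    have cc: "cot (of_real pi * ((1-u)/2)) = sin x / cos x"
      unfolding c2 cot_def using sin_cos_eq[of x] cos_sin_eq[of x] by simp
    have cx: "cot (of_real pi * (u/2)) = cos x / sin x" unfolding x_def cot_def ..
    have nz: "sin x \<noteq> 0" "cos x \<noteq> 0" using snz su by auto
    have "L = (1/2) * (of_real pi * (cos x / sin x) + of_real pi * (sin x / cos x))"
      unfolding L_def cc cx ..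
    also have "\<dots> = of_real pi / (2 * sin x * cos x)"
    proof -
      have s1: "cos x * cos x + sin x * sin x = 1"
        using sin_cos_squared_add[of x] by (simp add: power2_eq_square add.commute)
      have s2: "of_real pi * (cos x * cos x) + of_real pi * (sin x * sin x) = (of_real pi :: complex)"
        by (simp only: distrib_left[symmetric] s1 mult_1_right)
      show ?thesis using nz s2 by (simp add: field_simps)
    qed
    also have "\<dots> = of_real pi / sin (of_real pi * u)"
      unfolding su by simp
    finally show ?thesis .
  qed
  define S where "S N = (\<Sum>i<N. t i)" for N
  have S2: "S (2*m) = (\<Sum>k<m. t (2*k) + t (2*k+1))" for m
    by (induction m) (simp_all add: S_def)
  have ev: "(\<lambda>m. S (2*m)) \<longlonglongrightarrow> L"
    using pair unfolding sums_def S2 .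
  have t0: "t \<longlonglongrightarrow> 0"
  proof -
    have g: "(\<lambda>n. 1 / (of_nat n + u) + 1 / (of_nat n + (1 - u))) \<longlonglongrightarrow> 0 + 0"
      by (intro tendsto_add inv_lim0)
    have eq: "\<And>n. of_nat n + 1 - u = of_nat n + (1 - u)" by simp
    have "(\<lambda>n. 1 / (of_nat n + u) + 1 / (of_nat n + 1 - u)) \<longlonglongrightarrow> 0"
      using g unfolding eq by simp
    hence "(\<lambda>n. norm (1 / (of_nat n + u) + 1 / (of_nat n + 1 - u))) \<longlonglongrightarrow> 0"
      by (rule tendsto_norm_zero)
    moreover have "norm (t n) = norm (1 / (of_nat n + u) + 1 / (of_nat n + 1 - u))" for n
      by (simp add: t_def norm_mult norm_power)
    ultimately have "(\<lambda>n. norm (t n)) \<longlonglongrightarrow> 0" by (simp only:)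
    thus ?thesis by (rule tendsto_norm_zero_cancel)
  qed
  have t2: "(\<lambda>m. t (2*m)) \<longlonglongrightarrow> 0"
    by (rule LIMSEQ_subseq_LIMSEQ[OF t0, unfolded o_def]) (simp add: strict_mono_def)
  have od: "(\<lambda>m. S (2*m+1)) \<longlonglongrightarrow> L"
    using tendsto_add[OF ev t2] by (simp add: S_def)
  have "S \<longlonglongrightarrow> L" by (rule limseq_even_odd'[OF ev od])
  then show ?thesis unfolding sums_def S_def t_def Lval .
qed



lemma poch_shift: "pochhammer (x+1) n * x = pochhammer x n * (x + of_nat n :: complex)"
proof -
  have "pochhammer x (Suc n) = x * pochhammer (x + 1) n" by (rule pochhammer_rec)
  moreover have "pochhammer x (Suc n) = (x + of_nat n) * pochhammer x n" by (rule pochhammer_rec')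
  ultimately show ?thesis by (simp add: mult_ac)
qed

lemma alg:
  fixes x p q :: complex
  assumes "x - p \<noteq> 0" "x + p \<noteq> 0" "x - q \<noteq> 0" "x + q \<noteq> 0" "1/4 - (p^2+q^2)/2 \<noteq> 0"
  shows "(2*x) * ((x^2 - (p^2+q^2)/2) / (1/4 - (p^2+q^2)/2)) *
     (((1/2-p)*(1/2-q)*(1/2+p)*(1/2+q)) / ((x-p)*(x-q)*(x+p)*(x+q))) =
   ((1/2-p)*(1/2-q)*(1/2+p)*(1/2+q) / (2 * (1/4 - (p^2+q^2)/2))) *
     (1/(x-p) + 1/(x+p) + 1/(x-q) + 1/(x+q))"
proof -
  define D where "D = (x-p)*(x-q)*(x+p)*(x+q)"
  have D: "D \<noteq> 0" using assms by (simp add: D_def)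
  have sum: "1/(x-p) + 1/(x+p) + 1/(x-q) + 1/(x+q) = (4*x*(x^2 - (p^2+q^2)/2)) / D"
  proof -
    have n1: "x - p \<noteq> 0" "x + p \<noteq> 0" "x - q \<noteq> 0" "x + q \<noteq> 0" using assms by auto
    have "1/(x-p) + 1/(x+p) = (1*(x+p) + 1*(x-p)) / ((x-p)*(x+p))"
      by (rule add_frac_eq[OF n1(1) n1(2)])
    moreover have "1/(x-q) + 1/(x+q) = (1*(x+q) + 1*(x-q)) / ((x-q)*(x+q))"
      by (rule add_frac_eq[OF n1(3) n1(4)])
    moreover have "(1*(x+p) + 1*(x-p)) / ((x-p)*(x+p)) + (1*(x+q) + 1*(x-q)) / ((x-q)*(x+q))
       = ((1*(x+p) + 1*(x-p)) * ((x-q)*(x+q)) + (1*(x+q) + 1*(x-q)) * ((x-p)*(x+p))) / (((x-p)*(x+p)) * ((x-q)*(x+q)))"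
      by (rule add_frac_eq) (use n1 in auto)
    moreover have "((1*(x+p) + 1*(x-p)) * ((x-q)*(x+q)) + (1*(x+q) + 1*(x-q)) * ((x-p)*(x+p))) = 4*x*(x^2 - (p^2+q^2)/2)"
      by (simp add: algebra_simps power2_eq_square)
    moreover have "((x-p)*(x+p)) * ((x-q)*(x+q)) = D" unfolding D_def by (simp add: mult_ac)
    ultimately show ?thesis by (simp add: add.assoc)
  qed
  define E where "E = 1/4 - (p^2+q^2)/2"
  define T where "T = (1/2-p)*(1/2-q)*(1/2+p)*(1/2+q)"
  define W where "W = x^2 - (p^2+q^2)/2"
  have E: "E \<noteq> 0" using assms by (simp add: E_def)
  show ?thesis unfolding sum D_def[symmetric] E_def[symmetric] T_def[symmetric] W_def[symmetric]
    using D E by (simp add: field_simps)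
qed



lemma final_trig:
  fixes a b c :: complex
  assumes b: "b \<noteq> 0" and E: "b^2 - a^2 - c^2 \<noteq> 0"
    and cP: "cos (a * of_real pi / (2*b) + c * of_real pi / (2*b)) \<noteq> 0"
    and cM: "cos (a * of_real pi / (2*b) - c * of_real pi / (2*b)) \<noteq> 0"
  shows "((1/2 - (a+c)/(2*b)) * (1/2 - (a-c)/(2*b)) * (1/2 + (a+c)/(2*b)) * (1/2 + (a-c)/(2*b)))
           / (2 * (1/4 - (((a+c)/(2*b))^2 + ((a-c)/(2*b))^2)/2))
         * (of_real pi / cos (a * of_real pi / (2*b) + c * of_real pi / (2*b))
            + of_real pi / cos (a * of_real pi / (2*b) - c * of_real pi / (2*b)))
       = (of_real pi * ((b - a - c) * (b + a + c) * (b - a + c) * (b + a - c))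
            / (2 * (b ^ 4 - a ^ 2 * b ^ 2 - c ^ 2 * b ^ 2)))
         * (cos (a * of_real pi / (2 * b)) * cos (c * of_real pi / (2 * b))
            / (cos (c * of_real pi / b) + cos (a * of_real pi / b)))"
proof -
  define A where "A = a * of_real pi / (2*b)"
  define C where "C = c * of_real pi / (2*b)"
  have a2: "a * of_real pi / b = 2 * A" unfolding A_def using b by (simp add: field_simps)
  have c2: "c * of_real pi / b = 2 * C" unfolding C_def using b by (simp add: field_simps)
  define Q where "Q = (b - a - c) * (b + a + c) * (b - a + c) * (b + a - c)"
  define D where "D = b ^ 4 - a ^ 2 * b ^ 2 - c ^ 2 * b ^ 2"
  have Deq: "D = b^2 * (b^2 - a^2 - c^2)"
    unfolding D_def by (simp add: algebra_simps power2_eq_square power4_eq_xxxx)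
  have D: "D \<noteq> 0" unfolding Deq using b E by simp
  have K: "((1/2 - (a+c)/(2*b)) * (1/2 - (a-c)/(2*b)) * (1/2 + (a+c)/(2*b)) * (1/2 + (a-c)/(2*b)))
           / (2 * (1/4 - (((a+c)/(2*b))^2 + ((a-c)/(2*b))^2)/2)) = Q / (8 * D)"
  proof -
    have f1: "1/2 - (a+c)/(2*b) = (b-a-c)/(2*b)" using b by (simp add: field_simps)
    have f2: "1/2 - (a-c)/(2*b) = (b-a+c)/(2*b)" using b by (simp add: field_simps)
    have f3: "1/2 + (a+c)/(2*b) = (b+a+c)/(2*b)" using b by (simp add: field_simps)
    have f4: "1/2 + (a-c)/(2*b) = (b+a-c)/(2*b)" using b by (simp add: field_simps)
    have dd: "2 * (1/4 - (((a+c)/(2*b))^2 + ((a-c)/(2*b))^2)/2) = (b^2-a^2-c^2)/(2*b^2)"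
      using b by (simp add: field_simps power2_eq_square)
    have "(b-a-c)/(2*b) * ((b-a+c)/(2*b)) * ((b+a+c)/(2*b)) * ((b+a-c)/(2*b)) / ((b^2-a^2-c^2)/(2*b^2))
       = Q / (8 * (b^2 * (b^2 - a^2 - c^2)))"
    proof -
      have "(b-a-c)/(2*b) * ((b-a+c)/(2*b)) * ((b+a+c)/(2*b)) * ((b+a-c)/(2*b)) = Q / (16 * b^4)"
        by (simp add: Q_def times_divide_times_eq power4_eq_xxxx mult_ac)
      moreover have "Q / (16 * b^4) / ((b^2-a^2-c^2)/(2*b^2)) = Q / (8 * (b^2 * (b^2 - a^2 - c^2)))"
        using b E by (simp add: divide_simps)
      ultimately show ?thesis by simp
    qed
    then show ?thesis unfolding f1 f2 f3 f4 dd Deq .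
  qed
  have cPe: "cos (A + C) = cos A * cos C - sin A * sin C" by (rule cos_add)
  have cMe: "cos (A - C) = cos A * cos C + sin A * sin C" by (rule cos_diff)
  define G where "G = (cos A)^2 + (cos C)^2 - 1"
  have PM: "cos (A + C) * cos (A - C) = G"
    unfolding cPe cMe G_def
    by (simp add: algebra_simps power2_eq_square[symmetric] sin_squared_eq)
  have G: "G \<noteq> 0" using cP cM PM unfolding A_def C_def by auto
  have den: "cos (2*C) + cos (2*A) = 2 * G" unfolding G_def cos_double_cos by simp
  have sumeq: "of_real pi / cos (A + C) + of_real pi / cos (A - C) = of_real pi * (2 * cos A * cos C) / G"
  proof -
    have n: "cos (A+C) \<noteq> 0" "cos (A-C) \<noteq> 0" using cP cM unfolding A_def C_def by auto
    have "of_real pi / cos (A + C) + of_real pi / cos (A - C)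
        = of_real pi * (cos (A - C) + cos (A + C)) / (cos (A + C) * cos (A - C))"
      using n by (simp add: field_simps)
    also have "cos (A - C) + cos (A + C) = 2 * cos A * cos C" unfolding cPe cMe by simp
    finally show ?thesis unfolding PM .
  qed
  show ?thesis
    unfolding K a2 c2 A_def[symmetric] C_def[symmetric] Q_def[symmetric] D_def[symmetric] den sumeq
    using D G by (simp add: field_simps)
qed



lemma nonpos_notin: "(x::complex) \<notin> \<int>\<^sub>\<le>\<^sub>0 \<Longrightarrow> pochhammer x n \<noteq> 0"
  using pochhammer_eq_0_imp_nonpos_Int by blast

lemma u_notint:
  fixes w b :: complex
  assumes b: "b \<noteq> 0" and h: "\<not> odd_int_complex (w / b)"
  shows "1/2 - w/(2*b) \<notin> \<int>"
proof
  assume "1/2 - w/(2*b) \<in> \<int>"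
  then obtain k where k: "1/2 - w/(2*b) = of_int k" by (auto elim: Ints_cases)
  have "w/b = 1 - 2 * (1/2 - w/(2*b))" using b by (simp add: field_simps)
  also have "\<dots> = of_int (2 * (-k) + 1)" unfolding k by simp
  finally show False using h unfolding odd_int_complex_def by blast
qed

lemma term_ratio1:
  fixes x :: complex
  assumes "pochhammer x n \<noteq> 0" "x \<noteq> 0"
  shows "pochhammer (x+1) n / pochhammer x n = (x + of_nat n) / x"
  using poch_shift[of x n] assms by (simp add: field_simps)

lemma term_ratio2:
  fixes x :: complex
  assumes "pochhammer (1+x) n \<noteq> 0" "x + of_nat n \<noteq> 0"
  shows "pochhammer x n / pochhammer (1+x) n = x / (x + of_nat n)"
  using poch_shift[of x n] assms by (simp add: field_simps add.commute)

lemma alg2: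
  fixes x p q nu :: complex
  assumes nu: "nu^2 = (p^2+q^2)/2"
    and n: "x - p \<noteq> 0" "x + p \<noteq> 0" "x - q \<noteq> 0" "x + q \<noteq> 0" "1/2 - nu \<noteq> 0" "1/2 + nu \<noteq> 0"
  shows "(x/(1/2)) * ((x-nu)/(1/2-nu)) * ((x+nu)/(1/2+nu)) * ((1/2-p)/(x-p)) * ((1/2-q)/(x-q))
      * ((1/2+p)/(x+p)) * ((1/2+q)/(x+q)) =
   ((1/2-p)*(1/2-q)*(1/2+p)*(1/2+q) / (2 * (1/4 - (p^2+q^2)/2))) *
     (1/(x-p) + 1/(x+p) + 1/(x-q) + 1/(x+q))"
proof -
  have e1: "(x-nu)*(x+nu) = x^2 - (p^2+q^2)/2"
  proof -
    have "(x-nu)*(x+nu) = x^2 - nu^2" by (simp add: algebra_simps power2_eq_square)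
    then show ?thesis unfolding nu .
  qed
  have e2: "(1/2-nu)*(1/2+nu) = 1/4 - (p^2+q^2)/2"
  proof -
    have "(1/2-nu)*(1/2+nu) = 1/4 - nu^2" by (simp add: algebra_simps power2_eq_square)
    then show ?thesis unfolding nu .
  qed
  have E: "1/4 - (p^2+q^2)/2 \<noteq> 0" using n(5,6) e2 by (metis mult_eq_0_iff)
  have "(x/(1/2)) * ((x-nu)/(1/2-nu)) * ((x+nu)/(1/2+nu)) * ((1/2-p)/(x-p)) * ((1/2-q)/(x-q))
      * ((1/2+p)/(x+p)) * ((1/2+q)/(x+q)) =
     (2*x) * (((x-nu)*(x+nu)) / ((1/2-nu)*(1/2+nu))) *
     (((1/2-p)*(1/2-q)*(1/2+p)*(1/2+q)) / ((x-p)*(x-q)*(x+p)*(x+q)))"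
    by (simp add: field_simps)
  also have "\<dots> = ((1/2-p)*(1/2-q)*(1/2+p)*(1/2+q) / (2 * (1/4 - (p^2+q^2)/2))) *
     (1/(x-p) + 1/(x+p) + 1/(x-q) + 1/(x+q))"
    unfolding e1 e2 by (rule alg[OF n(1-4) E])
  finally show ?thesis .
qed



theorem mainTheorem9:
  fixes a b c s :: complex
  assumes hb: "Re b > 0"
    and h1: "Re (b + a + c) > 0" and h2: "Re (b + a - c) > 0"
    and h3: "Re (b - a + c) > 0" and h4: "Re (b - a - c) > 0"
    and hodd1: "\<not> odd_int_complex ((a + c) / b)"
    and hodd2: "\<not> odd_int_complex ((a - c) / b)"
    and hs: "s ^ 2 = a ^ 2 + c ^ 2"
    and hnu1: "1/2 + s / (2 * b) \<notin> \<int>\<^sub>\<le>\<^sub>0"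
    and hnu2: "1/2 - s / (2 * b) \<notin> \<int>\<^sub>\<le>\<^sub>0"
    and ht1: "1 + (1/2 - (a + c) / (2 * b)) \<notin> \<int>\<^sub>\<le>\<^sub>0"
    and ht2: "1 + (1/2 - (a - c) / (2 * b)) \<notin> \<int>\<^sub>\<le>\<^sub>0"
    and ht3: "1 + (1/2 + (a + c) / (2 * b)) \<notin> \<int>\<^sub>\<le>\<^sub>0"
    and ht4: "1 + (1/2 + (a - c) / (2 * b)) \<notin> \<int>\<^sub>\<le>\<^sub>0"
  shows "let \<nu> = s / (2 * b);
             \<tau>1 = 1/2 - (a + c) / (2 * b);
             \<tau>2 = 1/2 - (a - c) / (2 * b);
             \<tau>3 = 1/2 + (a + c) / (2 * b);
             \<tau>4 = 1/2 + (a - c) / (2 * b);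
             Q = (b - a - c) * (b + a + c) * (b - a + c) * (b + a - c);
             as = [1, 3/2, 3/2 - \<nu>, 3/2 + \<nu>, \<tau>1, \<tau>2, \<tau>3, \<tau>4];
             bs = [1/2, 1/2 - \<nu>, 1/2 + \<nu>, 1 + \<tau>1, 1 + \<tau>2, 1 + \<tau>3, 1 + \<tau>4]
         in summable (hyp_term as bs (-1)) \<and>
            hypergeom as bs (-1) =
              (of_real pi * Q / (2 * (b ^ 4 - a ^ 2 * b ^ 2 - c ^ 2 * b ^ 2)))
              * (cos (a * of_real pi / (2 * b)) * cos (c * of_real pi / (2 * b))
                 / (cos (c * of_real pi / b) + cos (a * of_real pi / b)))"
proof -
  have b: "b \<noteq> 0" using hb by auto
  define nu where "nu = s / (2 * b)"
  define p where "p = (a + c) / (2 * b)"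
  define q where "q = (a - c) / (2 * b)"
  define u1 where "u1 = 1/2 - p"
  define u2 where "u2 = 1/2 - q"
  have u1: "u1 \<notin> \<int>" unfolding u1_def p_def by (rule u_notint[OF b hodd1])
  have u2: "u2 \<notin> \<int>" unfolding u2_def q_def by (rule u_notint[OF b hodd2])
  have nuq: "nu^2 = (p^2+q^2)/2"
    unfolding nu_def p_def q_def using b hs by (simp add: field_simps power2_eq_square)
  have z0: "(0::complex) \<in> \<int>\<^sub>\<le>\<^sub>0" by simp
  have nnu1: "1/2 - nu \<noteq> 0" using hnu2 z0 unfolding nu_def by auto
  have nnu2: "1/2 + nu \<noteq> 0" using hnu1 z0 unfolding nu_def by auto
  have half: "(1/2::complex) \<notin> \<int>\<^sub>\<le>\<^sub>0"
  proof
    assume "(1/2::complex) \<in> \<int>\<^sub>\<le>\<^sub>0"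
    then obtain k :: nat where "(1/2::complex) = - of_nat k" by (auto elim!: nonpos_Ints_cases')
    hence "Re (1/2::complex) = Re (- (of_nat k :: complex))" by (rule arg_cong[where f=Re])
    thus False by simp
  qed
  have nint: "of_nat n + u \<noteq> 0" "of_nat n + 1 - u \<noteq> 0" if "u \<notin> \<int>" for u :: complex and n
  proof -
    show "of_nat n + u \<noteq> 0"
    proof
      assume "of_nat n + u = 0" then have "u = - of_nat n" by (simp add: add_eq_0_iff)
      with that show False by auto
    qed
    show "of_nat n + 1 - u \<noteq> 0"
    proof
      assume "of_nat n + 1 - u = 0" then have "u = of_nat n + 1" by simp
      with that show False by auto
    qed
  qed
  define K where "K = (1/2-p)*(1/2-q)*(1/2+p)*(1/2+q) / (2 * (1/4 - (p^2+q^2)/2))"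
  define f where "f u n = (-1)^n * (1 / (of_nat n + u) + 1 / (of_nat n + 1 - u))" for u :: complex and n :: nat
  define AS where "AS = [1, 3/2, 3/2 - nu, 3/2 + nu, 1/2 - p, 1/2 - q, 1/2 + p, 1/2 + q]"
  define BS where "BS = [1/2, 1/2 - nu, 1/2 + nu, 1 + (1/2 - p), 1 + (1/2 - q), 1 + (1/2 + p), 1 + (1/2 + q)]"
  have termeq: "hyp_term AS BS (-1) n = K * (f u1 n + f u2 n)" for n
  proof -
    define P where "P x = pochhammer x n" for x :: complex
    define x where "x = of_nat n + (1/2 :: complex)"
    have nzP: "P (1/2) \<noteq> 0" "P (1/2 - nu) \<noteq> 0" "P (1/2 + nu) \<noteq> 0"
      "P (1 + (1/2 - p)) \<noteq> 0" "P (1 + (1/2 - q)) \<noteq> 0" "P (1 + (1/2 + p)) \<noteq> 0" "P (1 + (1/2 + q)) \<noteq> 0"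
      unfolding P_def nu_def p_def q_def
      using nonpos_notin half hnu1 hnu2 ht1 ht2 ht3 ht4 by auto
    have xp: "x - p = of_nat n + u1" "x + p = of_nat n + 1 - u1"
             "x - q = of_nat n + u2" "x + q = of_nat n + 1 - u2"
      unfolding x_def u1_def u2_def by (simp_all add: algebra_simps)
    have nzx: "x - p \<noteq> 0" "x + p \<noteq> 0" "x - q \<noteq> 0" "x + q \<noteq> 0"
      unfolding xp using nint[OF u1] nint[OF u2] by auto
    have step1: "hyp_term AS BS (-1) n = (-1)^n * (P (3/2) / P (1/2)) * (P (3/2 - nu) / P (1/2 - nu))
        * (P (3/2 + nu) / P (1/2 + nu)) * (P (1/2 - p) / P (1 + (1/2 - p))) * (P (1/2 - q) / P (1 + (1/2 - q)))
        * (P (1/2 + p) / P (1 + (1/2 + p))) * (P (1/2 + q) / P (1 + (1/2 + q)))"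
      using nzP unfolding hyp_term_def AS_def BS_def P_def
      by (simp add: pochhammer_fact[symmetric] field_simps)
    have r1: "P (3/2) / P (1/2) = x / (1/2)"
    proof -
      have "(3/2::complex) = 1/2 + 1" by simp
      then show ?thesis using term_ratio1[of "1/2" n] nzP(1) unfolding P_def x_def by (simp add: add.commute)
    qed
    have r2: "P (3/2 - nu) / P (1/2 - nu) = (x - nu) / (1/2 - nu)"
    proof -
      have e: "(3/2 - nu) = (1/2 - nu) + 1" by simp
      show ?thesis unfolding e P_def using term_ratio1[of "1/2 - nu" n] nzP(2) nnu1
        unfolding P_def x_def by (simp add: algebra_simps)
    qed
    have r3: "P (3/2 + nu) / P (1/2 + nu) = (x + nu) / (1/2 + nu)"
    proof -
      have e: "(3/2 + nu) = (1/2 + nu) + 1" by simp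
      show ?thesis unfolding e P_def using term_ratio1[of "1/2 + nu" n] nzP(3) nnu2
        unfolding P_def x_def by (simp add: algebra_simps)
    qed
    have tr: "P y / P (1 + y) = y / (x - (1/2 - y))" if "P (1 + y) \<noteq> 0" "x - (1/2 - y) \<noteq> 0" for y
    proof -
      have e: "x - (1/2 - y) = y + of_nat n" unfolding x_def by (simp add: algebra_simps)
      show ?thesis using term_ratio2[of y n] that unfolding e P_def by simp
    qed
    have t1: "P (1/2 - p) / P (1 + (1/2 - p)) = (1/2 - p) / (x - p)"
      using tr[of "1/2 - p"] nzP(4) nzx(1) by simp
    have t2: "P (1/2 - q) / P (1 + (1/2 - q)) = (1/2 - q) / (x - q)"
      using tr[of "1/2 - q"] nzP(5) nzx(3) by simp
    have t3: "P (1/2 + p) / P (1 + (1/2 + p)) = (1/2 + p) / (x + p)"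
      using tr[of "1/2 + p"] nzP(6) nzx(2) by (simp add: algebra_simps)
    have t4: "P (1/2 + q) / P (1 + (1/2 + q)) = (1/2 + q) / (x + q)"
      using tr[of "1/2 + q"] nzP(7) nzx(4) by (simp add: algebra_simps)
    have "hyp_term AS BS (-1) n = (-1)^n * ((x/(1/2)) * ((x-nu)/(1/2-nu)) * ((x+nu)/(1/2+nu)) * ((1/2-p)/(x-p)) * ((1/2-q)/(x-q))
      * ((1/2+p)/(x+p)) * ((1/2+q)/(x+q)))"
      unfolding step1 r1 r2 r3 t1 t2 t3 t4 by (simp only: mult.assoc)
    also have "\<dots> = (-1)^n * (K * (1/(x-p) + 1/(x+p) + 1/(x-q) + 1/(x+q)))"
      unfolding K_def by (subst alg2[OF nuq nzx nnu1 nnu2]) (rule refl)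
    also have "\<dots> = K * (f u1 n + f u2 n)"
      unfolding f_def xp by (simp add: algebra_simps)
    finally show ?thesis .
  qed
  have S: "(hyp_term AS BS (-1)) sums (K * (of_real pi / sin (of_real pi * u1) + of_real pi / sin (of_real pi * u2)))"
  proof -
    have "(\<lambda>n. K * (f u1 n + f u2 n)) sums (K * (of_real pi / sin (of_real pi * u1) + of_real pi / sin (of_real pi * u2)))"
      unfolding f_def by (intro sums_mult sums_add alt_csc_sums u1 u2)
    then show ?thesis unfolding termeq .
  qed
  have V: "K * (of_real pi / sin (of_real pi * u1) + of_real pi / sin (of_real pi * u2)) =
     (of_real pi * ((b - a - c) * (b + a + c) * (b - a + c) * (b + a - c)) / (2 * (b ^ 4 - a ^ 2 * b ^ 2 - c ^ 2 * b ^ 2)))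
              * (cos (a * of_real pi / (2 * b)) * cos (c * of_real pi / (2 * b))
                 / (cos (c * of_real pi / b) + cos (a * of_real pi / b)))"
  proof -
    define AC where "AC = a * of_real pi / (2*b) + c * of_real pi / (2*b)"
    define AM where "AM = a * of_real pi / (2*b) - c * of_real pi / (2*b)"
    have e1: "of_real pi * u1 = of_real pi / 2 - AC" unfolding u1_def p_def AC_def using b by (simp add: field_simps)
    have e2: "of_real pi * u2 = of_real pi / 2 - AM" unfolding u2_def q_def AM_def using b by (simp add: field_simps)
    have s1: "sin (of_real pi * u1) = cos AC" unfolding e1 using cos_sin_eq[of AC] by simp
    have s2: "sin (of_real pi * u2) = cos AM" unfolding e2 using cos_sin_eq[of AM] by simp
    have cP: "cos AC \<noteq> 0" using sin_pi_nz[OF u1] s1 by simp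
    have cM: "cos AM \<noteq> 0" using sin_pi_nz[OF u2] s2 by simp
    have nn: "(1/2-nu)*(1/2+nu) \<noteq> 0" using nnu1 nnu2 by simp
    have "(1/2-nu)*(1/2+nu) = 1/4 - nu^2" by (simp add: algebra_simps power2_eq_square)
    also have "nu^2 = (a^2+c^2)/(4*b^2)" unfolding nu_def using hs by (simp add: power_divide power_mult_distrib)
    also have "1/4 - (a^2+c^2)/(4*b^2) = (b^2-a^2-c^2)/(4*b^2)" using b by (simp add: field_simps)
    finally have E: "b^2 - a^2 - c^2 \<noteq> 0" using nn by auto
    show ?thesis unfolding K_def p_def q_def s1 s2
      using final_trig[OF b E cP[unfolded AC_def] cM[unfolded AM_def]] unfolding AC_def AM_def .
  qed
  note S' = S[unfolded AS_def BS_def nu_def p_def q_def]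
  show ?thesis
    unfolding Let_def hypergeom_def
    using sums_summable[OF S'] sums_unique[OF S', symmetric] V by simp
qed

end
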